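(* The edge set of the complete graph $K_9$ cannot be partitioned into three subgraphs each isomorphic to $P_3 \square P_3$.
   Context: $P_n$ denotes the path graph on $n$ vertices and $K_m$ the complete graph on $m$ vertices. For graphs $G=(V,E)$ and $G'=(V',E')$, the Cartesian product $G \square G'$ has vertex set $V\times V'$, with $\{(v,v'),(w,w')\}$ an edge iff either $\{v,w\}\in E$ and $v'=w'$, or $v=w$ and $\{v',w'\}\in E'$. Thus $P_3\square P_3$ is the $3\times 3$ grid graph with 9 vertices and 12 edges. *)

theory Defs
  imports Main
begin

type_synonym 'a graph = "'a set \<times> 'a set set"

definition is_graph :: "'a graph \<Rightarrow> bool" where
  "is_graph G \<longleftrightarrow> finite (fst G) \<and> (\<forall>e\<in>snd G. e \<subseteq> fst G \<and> card e = 2)"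

definition path_graph :: "nat \<Rightarrow> nat graph" where
  "path_graph n = ({0..<n}, {{i, i+1} | i. i + 1 < n})"

definition complete_graph :: "nat \<Rightarrow> nat graph" where
  "complete_graph m = ({0..<m}, {{i, j} | i j. i < m \<and> j < m \<and> i \<noteq> j})"

definition cart_prod :: "'a graph \<Rightarrow> 'b graph \<Rightarrow> ('a \<times> 'b) graph" where
  "cart_prod G H = (fst G \<times> fst H,
     {{(v, v'), (w, w')} | v v' w w'.
        v \<in> fst G \<and> w \<in> fst G \<and> v' \<in> fst H \<and> w' \<in> fst H \<and>
        (({v, w} \<in> snd G \<and> v' = w') \<or> (v = w \<and> {v', w'} \<in> snd H))})"

definition graph_iso :: "'a graph \<Rightarrow> 'b graph \<Rightarrow> bool" where
  "graph_iso G H \<longleftrightarrow> (\<exists>f. bij_betw f (fst G) (fst H) \<and>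
     (\<forall>u\<in>fst G. \<forall>v\<in>fst G. {u, v} \<in> snd G \<longleftrightarrow> {f u, f v} \<in> snd H))"

definition subgraph :: "'a graph \<Rightarrow> 'a graph \<Rightarrow> bool" where
  "subgraph H G \<longleftrightarrow> is_graph H \<and> fst H \<subseteq> fst G \<and> snd H \<subseteq> snd G"

end

theory Submission imports Defs begin
definition nbr :: "'a graph \<Rightarrow> 'a \<Rightarrow> 'a set" where
  "nbr H v = {u \<in> fst H. {u, v} \<in> snd H}"
definition deg :: "'a graph \<Rightarrow> 'a \<Rightarrow> nat" where
  "deg H v = card (nbr H v)"
abbreviation "GG \<equiv> cart_prod (path_graph 3) (path_graph 3)"
definition gadj :: "nat \<times> nat \<Rightarrow> nat \<times> nat \<Rightarrow> bool" where
  "gadj x y = ((fst x = fst y \<and> (snd y = snd x + 1 \<or> snd x = snd y + 1)) \<or>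
              (snd x = snd y \<and> (fst y = fst x + 1 \<or> fst x = fst y + 1)))"
lemma path3_edge: "{v,w} \<in> snd (path_graph 3) \<longleftrightarrow> (w = v+1 \<and> v < 2) \<or> (v = w+1 \<and> w < 2)"
  unfolding path_graph_def by (auto simp: doubleton_eq_iff)
lemma GG_V: "fst GG = {0..<3} \<times> {0..<3}"
  by (simp add: cart_prod_def path_graph_def)
lemma GG_edge1: "{(a,b),(c,d)} \<in> snd GG \<Longrightarrow> gadj (a,b) (c,d)"
  unfolding cart_prod_def gadj_def
  by (auto simp: doubleton_eq_iff path3_edge)
lemma GG_edge2: "a < 3 \<Longrightarrow> b < 3 \<Longrightarrow> c < 3 \<Longrightarrow> d < 3 \<Longrightarrow> gadj (a,b) (c,d) \<Longrightarrow> {(a,b),(c,d)} \<in> snd GG"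
  unfolding cart_prod_def
  apply simp
  apply (rule exI[of _ a], rule exI[of _ b], rule exI[of _ c], rule exI[of _ d])
  apply (auto simp: path3_edge path_graph_def gadj_def)
  done
lemma GG_edge: "x \<in> fst GG \<Longrightarrow> y \<in> fst GG \<Longrightarrow> {x,y} \<in> snd GG \<longleftrightarrow> gadj x y"
  apply (cases x; cases y)
  apply (simp only: GG_V)
  apply (metis GG_edge1 GG_edge2 SigmaE atLeastLessThan_iff prod.inject)
  done
lemma nbrG: "x \<in> fst GG \<Longrightarrow> nbr GG x = {y \<in> {0..<3} \<times> {0..<3}. gadj y x}"
  unfolding nbr_def using GG_edge GG_V by auto
lemma n00: "nbr GG (0,0) = {(1,0),(0,1)}" by (subst nbrG) (auto simp: GG_V gadj_def)
lemma n01: "nbr GG (0,1) = {(1,1),(0,0),(0,2)}" by (subst nbrG) (auto simp: GG_V gadj_def)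
lemma n02: "nbr GG (0,2) = {(1,2),(0,1)}" by (subst nbrG) (auto simp: GG_V gadj_def)
lemma n10: "nbr GG (1,0) = {(0,0),(2,0),(1,1)}" by (subst nbrG) (auto simp: GG_V gadj_def)
lemma n11: "nbr GG (1,1) = {(0,1),(2,1),(1,0),(1,2)}" by (subst nbrG) (auto simp: GG_V gadj_def)
lemma n12: "nbr GG (1,2) = {(0,2),(2,2),(1,1)}" by (subst nbrG) (auto simp: GG_V gadj_def)
lemma n20: "nbr GG (2,0) = {(1,0),(2,1)}" by (subst nbrG) (auto simp: GG_V gadj_def)
lemma n21: "nbr GG (2,1) = {(1,1),(2,0),(2,2)}" by (subst nbrG) (auto simp: GG_V gadj_def)
lemma n22: "nbr GG (2,2) = {(1,2),(2,1)}" by (subst nbrG) (auto simp: GG_V gadj_def)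

lemma degG: assumes "x \<in> fst GG"
  shows "deg GG x = (if x = (1,1) then 4 else if fst x = 1 \<or> snd x = 1 then 3 else 2)"
proof -
  obtain a b where x: "x = (a,b)" "a < 3" "b < 3" using assms by (auto simp: GG_V)
  then have "a \<in> {0,1,2}" "b \<in> {0,1,2}" by auto
  then show ?thesis using x
    by (auto simp del: One_nat_def simp: deg_def n00 n01 n02 n10 n11 n12 n20 n21 n22)
qed

lemma G_center: "(1,1) \<in> fst GG" "deg GG (1,1) = 4"
  by (auto simp: GG_V degG)

lemma G_nb: "x \<in> fst GG \<Longrightarrow> {x,(1,1)} \<in> snd GG \<Longrightarrow> deg GG x = 3"
  using G_center(1) by (auto simp: GG_edge degG gadj_def)

lemma G_corner: "x \<in> fst GG \<Longrightarrow> y \<in> fst GG \<Longrightarrow> deg GG x = 2 \<Longrightarrow> deg GG y = 2 \<Longrightarrow> {x,y} \<notin> snd GG"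
  apply (simp add: GG_edge degG split: if_splits)
  apply (cases x; cases y)
  apply (auto simp: GG_V gadj_def)
  done

lemma iso_props:
  assumes "graph_iso H GG"
  shows "\<exists>f. bij_betw f (fst H) (fst GG) \<and> (\<forall>v\<in>fst H. deg H v = deg GG (f v)) \<and>
     (\<forall>u\<in>fst H. \<forall>v\<in>fst H. {u,v}\<in>snd H \<longleftrightarrow> {f u, f v} \<in> snd GG)"
proof -
  obtain f where bij: "bij_betw f (fst H) (fst GG)"
    and e: "\<forall>u\<in>fst H. \<forall>v\<in>fst H. {u, v} \<in> snd H \<longleftrightarrow> {f u, f v} \<in> snd GG"
    using assms unfolding graph_iso_def by blast
  have "deg H v = deg GG (f v)" if v: "v \<in> fst H" for v
  proof -
    have img: "f ` nbr H v = nbr GG (f v)"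
    proof
      show "f ` nbr H v \<subseteq> nbr GG (f v)"
        using e v bij_betw_apply[OF bij] by (auto simp: nbr_def)
    next
      show "nbr GG (f v) \<subseteq> f ` nbr H v"
      proof
        fix y assume y: "y \<in> nbr GG (f v)"
        then have "y \<in> f ` fst H" using bij_betw_imp_surj_on[OF bij] by (auto simp: nbr_def)
        then obtain u where u: "u \<in> fst H" "y = f u" by blast
        then show "y \<in> f ` nbr H v" using y e v by (auto simp: nbr_def)
      qed
    qed
    have "inj_on f (nbr H v)"
      using bij_betw_imp_inj_on[OF bij] by (rule inj_on_subset) (auto simp: nbr_def)
    then show ?thesis using img unfolding deg_def by (metis card_image)
  qed
  then show ?thesis using bij e by blast
qed

lemma K9_edge: "{u,v} \<in> snd (complete_graph 9) \<longleftrightarrow> u < 9 \<and> v < 9 \<and> u \<noteq> v"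
  unfolding complete_graph_def by (auto simp: doubleton_eq_iff)

lemma H_props:
  assumes sub: "subgraph H (complete_graph 9)" and iso: "graph_iso H GG"
  shows "fst H = {0..<9}" "\<forall>v<9. deg H v \<ge> 2"
    "\<exists>c<9. deg H c = 4 \<and> (\<forall>u<9. {u,c} \<in> snd H \<longrightarrow> deg H u = 3)"
    "\<forall>x<9. \<forall>y<9. deg H x = 2 \<longrightarrow> deg H y = 2 \<longrightarrow> {x,y} \<notin> snd H"
proof -
  obtain f where bij: "bij_betw f (fst H) (fst GG)" and d: "\<forall>v\<in>fst H. deg H v = deg GG (f v)"
    and e: "\<forall>u\<in>fst H. \<forall>v\<in>fst H. {u,v}\<in>snd H \<longleftrightarrow> {f u, f v} \<in> snd GG"
    using iso_props[OF iso] by blast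
  have "card (fst H) = card (fst GG)" using bij by (rule bij_betw_same_card)
  also have "\<dots> = 9" by (simp add: GG_V)
  finally have c9: "card (fst H) = 9" .
  have "fst H \<subseteq> {0..<9}" using sub by (simp add: subgraph_def complete_graph_def)
  then show V: "fst H = {0..<9}" using c9 by (intro card_subset_eq) auto
  have fin: "\<And>v. v \<in> fst H \<Longrightarrow> f v \<in> fst GG" using bij_betw_apply[OF bij] .
  show "\<forall>v<9. deg H v \<ge> 2"
  proof (intro allI impI)
    fix v :: nat assume "v < 9"
    then have "v \<in> fst H" using V by auto
    then show "deg H v \<ge> 2" using d fin[of v] degG[of "f v"] by auto
  qed
  have "(1,1) \<in> f ` fst H" using bij_betw_imp_surj_on[OF bij] G_center by auto
  then obtain c where c: "c \<in> fst H" "f c = (1,1)" by auto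
  show "\<exists>c<9. deg H c = 4 \<and> (\<forall>u<9. {u,c} \<in> snd H \<longrightarrow> deg H u = 3)"
  proof (intro exI conjI allI impI)
    show "c < 9" using c V by auto
    show "deg H c = 4" using c d G_center by auto
    fix u :: nat assume "u < 9" "{u,c} \<in> snd H"
    then have "u \<in> fst H" "{f u, f c} \<in> snd GG" using V c e by auto
    then show "deg H u = 3" using d G_nb fin c by auto
  qed
  show "\<forall>x<9. \<forall>y<9. deg H x = 2 \<longrightarrow> deg H y = 2 \<longrightarrow> {x,y} \<notin> snd H"
  proof (intro allI impI)
    fix x y :: nat assume "x < 9" "y < 9" "deg H x = 2" "deg H y = 2"
    then have "x \<in> fst H" "y \<in> fst H" "deg GG (f x) = 2" "deg GG (f y) = 2" using V d by auto
    then show "{x,y} \<notin> snd H" using e G_corner fin by blast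
  qed
qed

lemma deg_sum:
  assumes V: "fst H1 = {0..<9}" "fst H2 = {0..<9}" "fst H3 = {0..<9}"
    and U: "snd H1 \<union> snd H2 \<union> snd H3 = snd (complete_graph 9)"
    and D: "snd H1 \<inter> snd H2 = {}" "snd H1 \<inter> snd H3 = {}" "snd H2 \<inter> snd H3 = {}"
    and v: "v < 9"
  shows "deg H1 v + deg H2 v + deg H3 v = 8"
proof -
  have un: "nbr H1 v \<union> nbr H2 v \<union> nbr H3 v = {0..<9} - {v}"
  proof -
    have "nbr H1 v \<union> nbr H2 v \<union> nbr H3 v = {u. u < 9 \<and> {u,v} \<in> snd (complete_graph 9)}"
      unfolding nbr_def V U[symmetric] by auto
    also have "\<dots> = {0..<9} - {v}" using v by (auto simp: K9_edge)
    finally show ?thesis .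
  qed
  have f: "finite (nbr H1 v)" "finite (nbr H2 v)" "finite (nbr H3 v)"
    by (auto simp: nbr_def V)
  have d12: "nbr H1 v \<inter> nbr H2 v = {}" using D by (auto simp: nbr_def)
  have d3: "(nbr H1 v \<union> nbr H2 v) \<inter> nbr H3 v = {}" using D by (auto simp: nbr_def)
  have "card (nbr H1 v \<union> nbr H2 v \<union> nbr H3 v) = deg H1 v + deg H2 v + deg H3 v"
    using f d12 d3 by (simp add: card_Un_disjoint deg_def)
  then show ?thesis using un v by simp
qed

theorem theorem3:
  shows "\<not> (\<exists>H1 H2 H3 :: nat graph.
            subgraph H1 (complete_graph 9) \<and> subgraph H2 (complete_graph 9) \<and>
            subgraph H3 (complete_graph 9) \<and>
            graph_iso H1 (cart_prod (path_graph 3) (path_graph 3)) \<and>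
            graph_iso H2 (cart_prod (path_graph 3) (path_graph 3)) \<and>
            graph_iso H3 (cart_prod (path_graph 3) (path_graph 3)) \<and>
            snd H1 \<union> snd H2 \<union> snd H3 = snd (complete_graph 9) \<and>
            snd H1 \<inter> snd H2 = {} \<and> snd H1 \<inter> snd H3 = {} \<and> snd H2 \<inter> snd H3 = {})"
proof
  assume "\<exists>H1 H2 H3 :: nat graph.
            subgraph H1 (complete_graph 9) \<and> subgraph H2 (complete_graph 9) \<and>
            subgraph H3 (complete_graph 9) \<and>
            graph_iso H1 (cart_prod (path_graph 3) (path_graph 3)) \<and>
            graph_iso H2 (cart_prod (path_graph 3) (path_graph 3)) \<and>
            graph_iso H3 (cart_prod (path_graph 3) (path_graph 3)) \<and>
            snd H1 \<union> snd H2 \<union> snd H3 = snd (complete_graph 9) \<and>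
            snd H1 \<inter> snd H2 = {} \<and> snd H1 \<inter> snd H3 = {} \<and> snd H2 \<inter> snd H3 = {}"
  then obtain H1 H2 H3 :: "nat graph" where
    s1: "subgraph H1 (complete_graph 9)" and s2: "subgraph H2 (complete_graph 9)" and
    s3: "subgraph H3 (complete_graph 9)" and i1: "graph_iso H1 GG" and i2: "graph_iso H2 GG"
    and i3: "graph_iso H3 GG" and U: "snd H1 \<union> snd H2 \<union> snd H3 = snd (complete_graph 9)"
    and D: "snd H1 \<inter> snd H2 = {}" "snd H1 \<inter> snd H3 = {}" "snd H2 \<inter> snd H3 = {}"
    by blast
  note P1 = H_props[OF s1 i1] and P2 = H_props[OF s2 i2] and P3 = H_props[OF s3 i3]
  have S: "\<And>v. v < 9 \<Longrightarrow> deg H1 v + deg H2 v + deg H3 v = 8"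
    using deg_sum[OF P1(1) P2(1) P3(1) U D] by blast
  obtain c2 where c2: "c2 < 9" "deg H2 c2 = 4" "\<forall>u<9. {u,c2} \<in> snd H2 \<longrightarrow> deg H2 u = 3"
    using P2(3) by blast
  obtain c3 where c3: "c3 < 9" "deg H3 c3 = 4" "\<forall>u<9. {u,c3} \<in> snd H3 \<longrightarrow> deg H3 u = 3"
    using P3(3) by blast
  have "c2 \<noteq> c3" using S[OF c2(1)] c2 c3 P1(2) by force
  have a1: "deg H1 c2 = 2" "deg H3 c2 = 2" using S[OF c2(1)] c2 P1(2) P3(2) by force+
  have a2: "deg H1 c3 = 2" "deg H2 c3 = 2" using S[OF c3(1)] c3 P1(2) P2(2) by force+
  have "{c3,c2} \<in> snd (complete_graph 9)" using \<open>c2 \<noteq> c3\<close> c2 c3 by (simp add: K9_edge)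
  then have "{c3,c2} \<in> snd H1 \<or> {c3,c2} \<in> snd H2 \<or> {c2,c3} \<in> snd H3"
    using U by (auto simp: insert_commute)
  then show False
    using P1(4) c2 c3 a1 a2 by force
qed
end
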